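(* Let $\Psi\in\mathbb{R}^{n\times n}$ satisfy $\Psi=\Psi^\top\succeq 0$, let $\Phi\in\mathbb{R}^{n\times n}$ be Hurwitz, let $\Theta=\int_0^\infty e^{\Phi^\top t}\Psi e^{\Phi t}\,dt$, and let $c(\Phi)=\log(5/4)\,\|\Phi\|^{-1}$. Then $\|\Theta\|\ge \tfrac12 c(\Phi)\|\Psi\|$.
   Context: $\|\cdot\|$ denotes the spectral norm of a matrix. A matrix is Hurwitz if all its eigenvalues have negative real part. *)

theory Defs
  imports "HOL-Analysis.Analysis"
begin

fun matpow :: "real^'n^'n \<Rightarrow> nat \<Rightarrow> real^'n^'n" where
  "matpow A 0 = mat 1"
| "matpow A (Suc k) = A ** matpow A k"

definition mat_exp :: "real^'n^'n \<Rightarrow> real^'n^'n" where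
  "mat_exp A = (\<Sum>k. (1 / fact k) *\<^sub>R matpow A k)"

definition spectral_norm :: "real^'n^'n \<Rightarrow> real" where
  "spectral_norm A = onorm (\<lambda>x. A *v x)"

definition eigenvalue :: "real^'n^'n \<Rightarrow> complex \<Rightarrow> bool" where
  "eigenvalue A z \<longleftrightarrow>
     det ((\<chi> i j. (if i = j then z else 0) - complex_of_real (A $ i $ j)) :: complex^'n^'n) = 0"

definition hurwitz :: "real^'n^'n \<Rightarrow> bool" where
  "hurwitz A \<longleftrightarrow> (\<forall>z. eigenvalue A z \<longrightarrow> Re z < 0)"

end

theory Submission
  imports Defs "Jordan_Normal_Form.Spectral_Radius"
begin


typedef (overloaded) 'a blinop = "UNIV :: ('a::real_normed_vector \<Rightarrow>\<^sub>L 'a) set"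
  by simp

setup_lifting type_definition_blinop

lift_definition bapp :: "'a::real_normed_vector blinop \<Rightarrow> 'a \<Rightarrow> 'a" is blinfun_apply .

instantiation blinop :: (real_normed_vector) real_normed_vector
begin
lift_definition norm_blinop :: "'a blinop \<Rightarrow> real" is norm .
lift_definition minus_blinop :: "'a blinop \<Rightarrow> 'a blinop \<Rightarrow> 'a blinop" is minus .
lift_definition dist_blinop :: "'a blinop \<Rightarrow> 'a blinop \<Rightarrow> real" is dist .
definition uniformity_blinop :: "('a blinop \<times> 'a blinop) filter" where
  "uniformity_blinop = (INF e\<in>{0 <..}. principal {(x, y). dist x y < e})"
definition open_blinop :: "'a blinop set \<Rightarrow> bool" where
  "open_blinop U = (\<forall>x\<in>U. eventually (\<lambda>(x', y). x' = x \<longrightarrow> y \<in> U) uniformity)"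
lift_definition uminus_blinop :: "'a blinop \<Rightarrow> 'a blinop" is uminus .
lift_definition zero_blinop :: "'a blinop" is 0 .
lift_definition plus_blinop :: "'a blinop \<Rightarrow> 'a blinop \<Rightarrow> 'a blinop" is plus .
lift_definition scaleR_blinop::"real \<Rightarrow> 'a blinop \<Rightarrow> 'a blinop" is scaleR .
lift_definition sgn_blinop :: "'a blinop \<Rightarrow> 'a blinop" is sgn .
instance
  apply standard
  unfolding open_blinop_def uniformity_blinop_def
  apply (transfer, simp add: algebra_simps scaleR_add_left norm_triangle_ineq sgn_div_norm dist_norm)+
  done
end

lemma dist_blinop_rep: "dist x y = dist (Rep_blinop x) (Rep_blinop y)"
  by transfer simp

instance blinop :: (banach) banach
proof
  fix X :: "nat \<Rightarrow> 'a blinop"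
  assume "Cauchy X"
  hence "Cauchy (\<lambda>n. Rep_blinop (X n))"
    unfolding Cauchy_def dist_blinop_rep by simp
  then obtain L where L: "(\<lambda>n. Rep_blinop (X n)) \<longlonglongrightarrow> L"
    using convergent_def Cauchy_convergent_iff by blast
  have "X \<longlonglongrightarrow> Abs_blinop L"
    using L unfolding tendsto_iff dist_blinop_rep by (simp add: Abs_blinop_inverse)
  thus "convergent X" unfolding convergent_def by blast
qed

instantiation blinop :: (euclidean_space) real_normed_algebra_1
begin
lift_definition one_blinop :: "'a blinop" is id_blinfun .
lift_definition times_blinop :: "'a blinop \<Rightarrow> 'a blinop \<Rightarrow> 'a blinop" is blinfun_compose .
instance
proof
  fix a b c :: "'a blinop" and r :: real
  show "a * b * c = a * (b * c)" by transfer (auto intro: blinfun_eqI)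
  show "(a + b) * c = a * c + b * c" by transfer (auto intro: blinfun_eqI simp: blinfun.bilinear_simps)
  show "a * (b + c) = a * b + a * c" by transfer (auto intro!: blinfun_eqI simp: blinfun.bilinear_simps)
  show "1 * a = a" by transfer (auto intro: blinfun_eqI)
  show "a * 1 = a" by transfer (auto intro: blinfun_eqI)
  show "(0::'a blinop) \<noteq> 1"
  proof
    assume "(0::'a blinop) = 1"
    hence "norm (0::'a blinop) = norm (1::'a blinop)" by simp
    moreover have "norm (1::'a blinop) = 1" by transfer simp
    ultimately show False by simp
  qed
  show "r *\<^sub>R a * b = r *\<^sub>R (a * b)" by transfer (auto intro!: blinfun_eqI simp: blinfun.bilinear_simps)
  show "a * r *\<^sub>R b = r *\<^sub>R (a * b)" by transfer (auto intro!: blinfun_eqI simp: blinfun.bilinear_simps)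
  show "norm (a * b) \<le> norm a * norm b" by transfer (rule norm_blinfun_compose)
  show "norm (1::'a blinop) = 1" by transfer simp
qed
end

lemma bapp_times: "bapp (a * b) x = bapp a (bapp b x)" by transfer simp
lemma bapp_one: "bapp 1 x = x" by transfer simp
lemma bapp_norm: "norm (bapp a x) \<le> norm a * norm x" by transfer (rule norm_blinfun)
lemma bounded_linear_bapp_left: "bounded_linear (\<lambda>a. bapp a x)"
proof -
  have "bounded_linear (\<lambda>a. blinfun_apply (Rep_blinop a) x)"
  proof
    fix a b :: "'a blinop" and r
    show "blinfun_apply (Rep_blinop (a + b)) x = blinfun_apply (Rep_blinop a) x + blinfun_apply (Rep_blinop b) x"
      by transfer (simp add: blinfun.bilinear_simps)
    show "blinfun_apply (Rep_blinop (r *\<^sub>R a)) x = r *\<^sub>R blinfun_apply (Rep_blinop a) x"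
      by transfer (simp add: blinfun.bilinear_simps)
    show "\<exists>K. \<forall>a. norm (blinfun_apply (Rep_blinop a) x) \<le> norm a * K"
      by (rule exI[of _ "norm x"]) (metis bapp.rep_eq bapp_norm)
  qed
  thus ?thesis by (simp add: bapp.rep_eq)
qed


definition toM :: "real^'n^'n \<Rightarrow> (real^'n) blinop" where
  "toM A = Abs_blinop (Blinfun (\<lambda>x. A *v x))"

definition fromM :: "(real^'n) blinop \<Rightarrow> real^'n^'n" where
  "fromM X = matrix (bapp X)"

lemma bapp_toM[simp]: "bapp (toM A) x = A *v x"
proof -
  have "blinfun_apply (Blinfun ((*v) A)) = (*v) A"
    by (rule bounded_linear_Blinfun_apply[OF matrix_vector_mul_bounded_linear])
  thus ?thesis by (simp add: toM_def bapp.rep_eq Abs_blinop_inverse)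
qed

lemma linear_bapp: "linear (bapp X)"
  unfolding bapp.rep_eq by (rule bounded_linear.linear[OF blinfun.bounded_linear_right])

lemma fromM_apply[simp]: "fromM X *v x = bapp X x"
  unfolding fromM_def by (simp add: matrix_works linear_matrix_vector_mul_eq linear_bapp)

lemma fromM_toM[simp]: "fromM (toM A) = A"
proof -
  have "bapp (toM A) = (*v) A" by (rule ext) simp
  thus ?thesis unfolding fromM_def by (simp add: matrix_of_matrix_vector_mul)
qed

lemma bapp_eqI: "(\<And>x. bapp X x = bapp Y x) \<Longrightarrow> X = Y"
  by transfer (auto intro: blinfun_eqI)

lemma toM_fromM[simp]: "toM (fromM X) = X"
  by (rule bapp_eqI) simp

lemma fromM_mult: "fromM (X * Y) = fromM X ** fromM Y"
  by (simp add: matrix_eq matrix_vector_mul_assoc[symmetric] bapp_times)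

lemma fromM_one: "fromM 1 = Finite_Cartesian_Product.mat 1"
  by (simp add: matrix_eq bapp_one)

lemma matpow_fromM: "fromM (X ^ k) = matpow (fromM X) k"
  by (induction k) (simp_all add: fromM_one fromM_mult)

lemma bapp_add: "bapp (X + Y) x = bapp X x + bapp Y x"
  by transfer (simp add: blinfun.bilinear_simps)

lemma bapp_scaleR: "bapp (r *\<^sub>R X) x = r *\<^sub>R bapp X x"
  by transfer (simp add: blinfun.bilinear_simps)

lemma linear_fromM: "linear fromM"
proof
  fix X Y :: "(real^'n) blinop" and r :: real
  show "fromM (X + Y) = fromM X + fromM Y"
    by (simp add: matrix_eq matrix_vector_mult_add_rdistrib bapp_add)
  show "fromM (r *\<^sub>R X) = r *\<^sub>R fromM X"
    by (simp add: matrix_eq bapp_scaleR scaleR_matrix_vector_assoc[symmetric])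
qed

lemma bounded_linear_fromM: "bounded_linear (fromM :: (real^'n) blinop \<Rightarrow> real^'n^'n)"
proof -
  have "\<exists>K. \<forall>X::(real^'n) blinop. norm (fromM X) \<le> norm X * K"
  proof (intro exI allI)
    fix X :: "(real^'n) blinop"
    have "norm (fromM X) \<le> (\<Sum>i\<in>UNIV. norm (fromM X $ i))"
      unfolding norm_vec_def by (rule L2_set_le_sum) simp
    also have "\<dots> \<le> (\<Sum>i\<in>(UNIV::'n set). \<Sum>j\<in>(UNIV::'n set). norm X)"
    proof (rule sum_mono)
      fix i
      have "norm (fromM X $ i) \<le> (\<Sum>j\<in>UNIV. \<bar>fromM X $ i $ j\<bar>)" by (rule norm_le_l1_cart)
      also have "\<dots> \<le> (\<Sum>j\<in>(UNIV::'n set). norm X)"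
      proof (rule sum_mono)
        fix j
        have "fromM X $ i $ j = bapp X (axis j 1) $ i"
          unfolding fromM_def matrix_def by simp
        hence "\<bar>fromM X $ i $ j\<bar> \<le> norm (bapp X (axis j 1))"
          by (metis component_le_norm_cart)
        also have "\<dots> \<le> norm X * norm (axis j (1::real))" by (rule bapp_norm)
        finally show "\<bar>fromM X $ i $ j\<bar> \<le> norm X" by (simp add: norm_axis_1)
      qed
      finally show "norm (fromM X $ i) \<le> (\<Sum>j\<in>(UNIV::'n set). norm X)" .
    qed
    finally show "norm (fromM X) \<le> norm X * (real CARD('n) * real CARD('n))"
      by (simp add: algebra_simps)
  qed
  thus ?thesis using linear_fromM by (simp add: bounded_linear_def bounded_linear_axioms_def)
qed

lemma mat_exp_fromM: "mat_exp A = fromM (exp (toM A))"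
proof -
  have s: "(\<lambda>k. (toM A) ^ k /\<^sub>R fact k) sums exp (toM A)"
    unfolding exp_def by (rule summable_sums[OF summable_exp_generic])
  have "(\<lambda>k. fromM ((toM A) ^ k /\<^sub>R fact k)) sums fromM (exp (toM A))"
    by (rule bounded_linear.sums[OF bounded_linear_fromM s])
  moreover have "\<And>k. fromM ((toM A) ^ k /\<^sub>R fact k) = (1 / fact k) *\<^sub>R matpow A k"
    by (simp add: linear_scale[OF linear_fromM] matpow_fromM divide_inverse_commute)
  ultimately have "(\<lambda>k. (1 / fact k) *\<^sub>R matpow A k) sums fromM (exp (toM A))" by simp
  thus ?thesis unfolding mat_exp_def by (rule sums_unique[symmetric])
qed

lemma toM_scaleR: "toM (t *\<^sub>R A) = t *\<^sub>R toM A"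
  by (rule bapp_eqI) (simp add: bapp_scaleR scaleR_matrix_vector_assoc[symmetric])

lemma mat_exp_apply: "mat_exp (t *\<^sub>R A) *v x = bapp (exp (t *\<^sub>R toM A)) x"
  by (simp add: mat_exp_fromM toM_scaleR)

lemma norm_toM: "norm (toM A) = spectral_norm A"
  unfolding spectral_norm_def toM_def norm_blinop_def
  by (simp add: Abs_blinop_inverse norm_blinfun.rep_eq bounded_linear_Blinfun_apply matrix_vector_mul_bounded_linear)

lemma mat_exp_deriv:
  "((\<lambda>t. mat_exp (t *\<^sub>R A) *v x) has_vector_derivative A *v (mat_exp (t *\<^sub>R A) *v x)) (at t within T)"
proof -
  have "((\<lambda>t. exp (t *\<^sub>R toM A)) has_vector_derivative toM A * exp (t *\<^sub>R toM A)) (at t within T)"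
    using exp_scaleR_has_vector_derivative_right[of "toM A" t T] exp_times_scaleR_commute by metis
  from bounded_linear.has_vector_derivative[OF bounded_linear_bapp_left this, of x]
  show ?thesis by (simp add: mat_exp_apply bapp_times)
qed


definition conv :: "(nat \<Rightarrow> 'n::finite) \<Rightarrow> real^'n^'n \<Rightarrow> complex mat" where
  "conv e M = Matrix.mat CARD('n) CARD('n) (\<lambda>(i,j). complex_of_real (M $ e i $ e j))"

lemma conv_carrier: "conv (e :: nat \<Rightarrow> 'n::finite) M \<in> carrier_mat CARD('n) CARD('n)"
  unfolding conv_def by simp

lemma conv_dims[simp]: "dim_row (conv (e :: nat \<Rightarrow> 'n::finite) M) = CARD('n)" "dim_col (conv e M) = CARD('n)"
  unfolding conv_def by simp_all

lemma conv_index: "i < CARD('n) \<Longrightarrow> j < CARD('n) \<Longrightarrow> conv e M $$ (i,j) = complex_of_real (M $ e i $ e j)"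
  for M :: "real^'n::finite^'n" and e :: "nat \<Rightarrow> 'n"
  unfolding conv_def by simp

lemma reindex_e:
  assumes e: "bij_betw e {0..<CARD('n)} (UNIV::'n::finite set)"
  shows "(\<Sum>k\<in>{0..<CARD('n)}. g (e k)) = (\<Sum>l\<in>UNIV. g l)"
  using sum.reindex_bij_betw[OF e] .

lemma e_inj:
  assumes e: "bij_betw e {0..<CARD('n)} (UNIV::'n::finite set)"
    and "i < CARD('n)" "j < CARD('n)"
  shows "e i = e j \<longleftrightarrow> i = j"
  using assms bij_betw_imp_inj_on[OF e] unfolding inj_on_def by auto

lemma conv_mult:
  fixes M N :: "real^'n::finite^'n"
  assumes e: "bij_betw e {0..<CARD('n)} (UNIV::'n set)"
  shows "conv e (M ** N) = conv e M * conv e N"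
proof (rule eq_matI)
  fix i j assume i: "i < dim_row (conv e M * conv e N)" and j: "j < dim_col (conv e M * conv e N)"
  hence i': "i < CARD('n)" and j': "j < CARD('n)" by simp_all
  have "(conv e M * conv e N) $$ (i,j) = (\<Sum>k\<in>{0..<CARD('n)}. conv e M $$ (i,k) * conv e N $$ (k,j))"
    using i' j' by (simp add: scalar_prod_def)
  also have "\<dots> = (\<Sum>k\<in>{0..<CARD('n)}. complex_of_real (M $ e i $ e k * N $ e k $ e j))"
    using i' j' by (intro sum.cong) (simp_all add: conv_index)
  also have "\<dots> = (\<Sum>l\<in>UNIV. complex_of_real (M $ e i $ l * N $ l $ e j))"
    by (rule reindex_e[OF e])
  also have "\<dots> = conv e (M ** N) $$ (i,j)"
    using i' j' by (simp add: conv_index matrix_matrix_mult_def)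
  finally show "conv e (M ** N) $$ (i,j) = (conv e M * conv e N) $$ (i,j)" by simp
qed simp_all

lemma conv_one:
  assumes e: "bij_betw e {0..<CARD('n)} (UNIV::'n::finite set)"
  shows "conv e (Finite_Cartesian_Product.mat 1 :: real^'n^'n) = 1\<^sub>m CARD('n)"
proof (rule eq_matI)
  fix i j assume "i < dim_row (1\<^sub>m CARD('n))" "j < dim_col (1\<^sub>m CARD('n))"
  hence i': "i < CARD('n)" and j': "j < CARD('n)" by simp_all
  show "conv e (Finite_Cartesian_Product.mat 1 :: real^'n^'n) $$ (i,j) = 1\<^sub>m CARD('n) $$ (i,j)"
    using i' j' e_inj[OF e i' j'] by (simp add: conv_index Finite_Cartesian_Product.mat_def)
qed simp_all

lemma matpow_Suc_right: "matpow M (Suc k) = matpow M k ** M"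
  by (induction k) (simp_all add: matrix_mul_assoc matrix_mul_lid matrix_mul_rid)

lemma conv_pow:
  assumes e: "bij_betw e {0..<CARD('n)} (UNIV::'n::finite set)"
  shows "conv e (matpow (M :: real^'n^'n) k) = conv e M ^\<^sub>m k"
proof (induction k)
  case 0 thus ?case using conv_one[OF e] by simp
next
  case (Suc k)
  thus ?case by (simp only: matpow_Suc_right conv_mult[OF e] pow_mat.simps)
qed


lemma det_zero_if_kernel:
  fixes D :: "complex^'n::finite^'n"
  assumes "D *v w = 0" "w \<noteq> 0"
  shows "Determinants.det D = 0"
proof (rule ccontr)
  assume "Determinants.det D \<noteq> 0"
  hence "invertible D" by (simp add: invertible_det_nz)
  then obtain D' where "D' ** D = Finite_Cartesian_Product.mat 1"
    unfolding invertible_def by blast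
  hence "w = D' *v (D *v w)"
    by (metis matrix_vector_mul_assoc matrix_vector_mul_lid)
  with assms show False by simp
qed

lemma conv_eigen_sum:
  fixes \<Phi> :: "real^'n::finite^'n"
  assumes e: "bij_betw e {0..<CARD('n)} (UNIV::'n set)"
    and v: "v \<in> carrier_vec CARD('n)" and i: "i < CARD('n)"
  shows "(conv e \<Phi> *\<^sub>v v) $ i = (\<Sum>k\<in>{0..<CARD('n)}. complex_of_real (\<Phi> $ e i $ e k) * v $ k)"
  using v i by (simp add: scalar_prod_def conv_index)

lemma conv_eigenvalue:
  fixes \<Phi> :: "real^'n::finite^'n"
  assumes e: "bij_betw e {0..<CARD('n)} (UNIV::'n set)"
    and ev: "Char_Poly.eigenvalue (conv e \<Phi>) z"
  shows "Defs.eigenvalue \<Phi> z"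
proof -
  let ?n = "CARD('n)"
  from ev obtain v where v: "v \<in> carrier_vec ?n" and nz: "v \<noteq> 0\<^sub>v ?n"
    and eq: "conv e \<Phi> *\<^sub>v v = z \<cdot>\<^sub>v v"
    unfolding Char_Poly.eigenvalue_def eigenvector_def by auto
  define ie where "ie = inv_into {0..<?n} e"
  have ie1: "\<And>l. ie l < ?n"
  proof -
    fix l
    have "l \<in> e ` {0..<?n}" using e unfolding bij_betw_def by auto
    from inv_into_into[OF this] show "ie l < ?n" unfolding ie_def by simp
  qed
  have ie2: "\<And>l. e (ie l) = l"
    using e unfolding ie_def bij_betw_def by (auto intro: f_inv_into_f)
  note ie = ie1 ie2
  have iee: "\<And>k. k < ?n \<Longrightarrow> ie (e k) = k"
    using e unfolding ie_def bij_betw_def by (auto intro: inv_into_f_f)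
  define w :: "complex^'n" where "w = (\<chi> l. v $ ie l)"
  define D :: "complex^'n^'n" where
    "D = (\<chi> i j. (if i = j then z else 0) - complex_of_real (\<Phi> $ i $ j))"
  have "D *v w = 0"
  proof (subst Finite_Cartesian_Product.vec_eq_iff, intro allI)
    fix l
    have "(D *v w) $ l = (\<Sum>m\<in>UNIV. ((if l = m then z else 0) - complex_of_real (\<Phi> $ l $ m)) * w $ m)"
      by (simp add: D_def matrix_vector_mult_def)
    also have "\<dots> = z * w $ l - (\<Sum>m\<in>UNIV. complex_of_real (\<Phi> $ l $ m) * w $ m)"
    proof -
      have "\<And>m. ((if l = m then z else 0) - complex_of_real (\<Phi> $ l $ m)) * w $ m
          = (if l = m then z * w $ m else 0) - complex_of_real (\<Phi> $ l $ m) * w $ m"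
        by (simp add: algebra_simps)
      hence "(\<Sum>m\<in>UNIV. ((if l = m then z else 0) - complex_of_real (\<Phi> $ l $ m)) * w $ m)
          = (\<Sum>m\<in>UNIV. (if l = m then z * w $ m else 0)) - (\<Sum>m\<in>UNIV. complex_of_real (\<Phi> $ l $ m) * w $ m)"
        by (simp add: sum_subtractf)
      thus ?thesis by simp
    qed
    also have "(\<Sum>m\<in>UNIV. complex_of_real (\<Phi> $ l $ m) * w $ m)
        = (\<Sum>k\<in>{0..<?n}. complex_of_real (\<Phi> $ l $ e k) * w $ e k)"
      by (rule reindex_e[OF e, symmetric])
    also have "\<dots> = (\<Sum>k\<in>{0..<?n}. complex_of_real (\<Phi> $ e (ie l) $ e k) * v $ k)"
      by (intro sum.cong) (simp_all add: w_def iee ie)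
    also have "\<dots> = (conv e \<Phi> *\<^sub>v v) $ ie l"
      by (rule conv_eigen_sum[OF e v ie(1), symmetric])
    also have "\<dots> = z * v $ ie l" using eq v ie(1) by simp
    finally show "(D *v w) $ l = 0 $ l" by (simp add: w_def)
  qed
  moreover have "w \<noteq> 0"
  proof
    assume w0: "w = 0"
    have "v = 0\<^sub>v ?n"
    proof (rule eq_vecI)
      fix k assume "k < dim_vec (0\<^sub>v ?n)"
      hence k: "k < ?n" by simp
      have "v $ k = w $ e k" by (simp add: w_def iee k)
      thus "v $ k = 0\<^sub>v ?n $ k" using w0 k by simp
    qed (use v in simp)
    with nz show False by simp
  qed
  ultimately have "Determinants.det D = 0" by (rule det_zero_if_kernel)
  thus ?thesis unfolding Defs.eigenvalue_def D_def .
qed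


no_notation Matrix.vec_index (infixl \<open>$\<close> 100)
no_notation Matrix.scalar_prod (infix \<open>\<bullet>\<close> 70)



lemma matpow_scaleR: "matpow (c *\<^sub>R M) k = c ^ k *\<^sub>R matpow M k"
proof (induction k)
  case 0 thus ?case by simp
next
  case (Suc k)
  have "(c *\<^sub>R M) ** (c ^ k *\<^sub>R matpow M k) = (c * c ^ k) *\<^sub>R (M ** matpow M k)"
    by (simp add: matrix_matrix_mult_def Finite_Cartesian_Product.vec_eq_iff sum_distrib_left algebra_simps)
  thus ?case using Suc by simp
qed

lemma hurwitz_pow_bound:
  fixes \<Phi> :: "real^'n::finite^'n"
  assumes hw: "hurwitz \<Phi>"
  shows "\<exists>h>0. \<exists>r>0. r < 1 \<and> (\<exists>c. \<forall>k a b.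
     \<bar>matpow (Finite_Cartesian_Product.mat 1 + h *\<^sub>R \<Phi>) k $ a $ b\<bar> \<le> c * r ^ k)"
proof -
  let ?n = "CARD('n)"
  obtain e where e: "bij_betw e {0..<?n} (UNIV::'n set)"
    using ex_bij_betw_nat_finite[of "UNIV::'n set"] by auto
  have npos: "0 < ?n" by simp
  define S where "S = spectrum (conv e \<Phi>)"
  have finS: "finite S" unfolding S_def by (rule card_finite_spectrum(1)[OF conv_carrier])
  have reS: "\<And>z. z \<in> S \<Longrightarrow> Re z < 0"
  proof -
    fix z assume "z \<in> S"
    hence "Char_Poly.eigenvalue (conv e \<Phi>) z" unfolding S_def spectrum_def by simp
    hence "Defs.eigenvalue \<Phi> z" by (rule conv_eigenvalue[OF e])
    thus "Re z < 0" using hw unfolding hurwitz_def by blast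
  qed
  define h0 where "h0 = Min (insert 1 ((\<lambda>z. - Re z / (cmod z)^2) ` S))"
  have h0pos: "h0 > 0"
    unfolding h0_def
  proof (subst Min_gr_iff)
    show "finite (insert 1 ((\<lambda>z. - Re z / (cmod z)\<^sup>2) ` S))" using finS by simp
    show "insert 1 ((\<lambda>z. - Re z / (cmod z)\<^sup>2) ` S) \<noteq> {}" by simp
    show "\<forall>a\<in>insert 1 ((\<lambda>z. - Re z / (cmod z)\<^sup>2) ` S). 0 < a"
    proof
      fix a assume "a \<in> insert 1 ((\<lambda>z. - Re z / (cmod z)\<^sup>2) ` S)"
      then consider "a = 1" | z where "z \<in> S" "a = - Re z / (cmod z)\<^sup>2" by auto
      thus "0 < a"
      proof cases
        case 1 thus ?thesis by simp
      next
        case 2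
        have "Re z < 0" using reS[OF 2(1)] .
        hence "z \<noteq> 0" by auto
        hence "cmod z > 0" by simp
        hence "(cmod z)^2 > 0" by simp
        hence "Re z / (cmod z)^2 < 0" using \<open>Re z < 0\<close> by (simp add: divide_neg_pos)
        thus ?thesis using 2 by simp
      qed
    qed
  qed
  define h where "h = h0 / 2"
  have hpos: "h > 0" using h0pos by (simp add: h_def)
  have hS: "\<And>z. z \<in> S \<Longrightarrow> cmod (1 + complex_of_real h * z) < 1"
  proof -
    fix z assume zS: "z \<in> S"
    have rez: "Re z < 0" by (rule reS[OF zS])
    hence "z \<noteq> 0" by auto
    hence cz: "(cmod z)^2 > 0" by simp
    have "h0 \<le> - Re z / (cmod z)^2" unfolding h0_def using finS zS by (intro Min_le) auto
    moreover have "h < h0" using h0pos by (simp add: h_def)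
    ultimately have "h < - Re z / (cmod z)^2" by linarith
    hence hz: "h * (cmod z)^2 < - Re z" using pos_less_divide_eq[OF cz, of h "- Re z"] by simp
    have "(cmod (1 + complex_of_real h * z))^2 = (1 + h * Re z)^2 + (h * Im z)^2"
      by (simp add: cmod_power2)
    also have "\<dots> = 1 + h * (2 * Re z + h * ((Re z)^2 + (Im z)^2))"
      by (simp add: power2_eq_square algebra_simps)
    also have "(Re z)^2 + (Im z)^2 = (cmod z)^2" by (simp add: cmod_power2)
    also have "1 + h * (2 * Re z + h * (cmod z)^2) < 1"
    proof -
      have "2 * Re z + h * (cmod z)^2 < 0" using hz rez by linarith
      thus ?thesis using hpos by (simp add: mult_pos_neg)
    qed
    finally have "(cmod (1 + complex_of_real h * z))^2 < 1^2" by simp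
    thus "cmod (1 + complex_of_real h * z) < 1"
      using power_less_imp_less_base by fastforce
  qed
  define m where "m = Max (insert 0 ((\<lambda>z. cmod (1 + complex_of_real h * z)) ` S))"
  have m1: "m < 1" unfolding m_def using finS hS by (subst Max_less_iff) auto
  have m0: "0 \<le> m" unfolding m_def using finS by (intro Max_ge) auto
  have mS: "\<And>z. z \<in> S \<Longrightarrow> cmod (1 + complex_of_real h * z) \<le> m"
    unfolding m_def using finS by (intro Max_ge) auto
  define r where "r = (1 + m) / 2"
  have r0: "0 < r" and r1: "r < 1" using m0 m1 by (simp_all add: r_def)
  have rS: "\<And>z. z \<in> S \<Longrightarrow> cmod (1 + complex_of_real h * z) < r"
  proof -
    fix z assume "z \<in> S"
    have "m < r" using m1 unfolding r_def by simp
    with mS[OF \<open>z \<in> S\<close>] show "cmod (1 + complex_of_real h * z) < r" by (rule order_le_less_trans)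
  qed
  define B where "B = Finite_Cartesian_Product.mat 1 + h *\<^sub>R \<Phi>"
  define Bs where "Bs = (1 / r) *\<^sub>R B"
  have Bs_ent: "\<And>a b. Bs $ a $ b = (1 / r) * ((if a = b then 1 else 0) + h * \<Phi> $ a $ b)"
    by (simp add: Bs_def B_def Finite_Cartesian_Product.mat_def)
  have sr: "spectral_radius (conv e Bs) < 1"
  proof -
    from spectral_radius_mem_max(1)[OF conv_carrier npos, of e Bs]
    obtain \<mu> where \<mu>: "\<mu> \<in> spectrum (conv e Bs)" and srm: "spectral_radius (conv e Bs) = cmod \<mu>"
      by auto
    from \<mu> obtain v where v: "v \<in> carrier_vec ?n" and nz: "v \<noteq> 0\<^sub>v ?n"
      and eq: "conv e Bs *\<^sub>v v = \<mu> \<cdot>\<^sub>v v"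
      unfolding spectrum_def Char_Poly.eigenvalue_def eigenvector_def by auto
    define z where "z = (complex_of_real r * \<mu> - 1) / complex_of_real h"
    have "conv e \<Phi> *\<^sub>v v = z \<cdot>\<^sub>v v"
    proof (rule eq_vecI)
      fix i assume "i < dim_vec (z \<cdot>\<^sub>v v)"
      hence i: "i < ?n" using v by simp
      define s where "s = (\<Sum>k\<in>{0..<?n}. complex_of_real (\<Phi> $ e i $ e k) * vec_index v k)"
      have lhs: "vec_index (conv e \<Phi> *\<^sub>v v) i = s" unfolding s_def by (rule conv_eigen_sum[OF e v i])
      have "vec_index (conv e Bs *\<^sub>v v) i = (\<Sum>k\<in>{0..<?n}. complex_of_real (Bs $ e i $ e k) * vec_index v k)"
        by (rule conv_eigen_sum[OF e v i])
      also have "\<dots> = (\<Sum>k\<in>{0..<?n}. complex_of_real (1/r) * ((if i = k then vec_index v k else 0)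
            + complex_of_real h * (complex_of_real (\<Phi> $ e i $ e k) * vec_index v k)))"
      proof (rule sum.cong)
        fix k assume "k \<in> {0..<?n}"
        hence k: "k < ?n" by simp
        show "complex_of_real (Bs $ e i $ e k) * vec_index v k = complex_of_real (1/r) * ((if i = k then vec_index v k else 0)
            + complex_of_real h * (complex_of_real (\<Phi> $ e i $ e k) * vec_index v k))"
          using e_inj[OF e i k] by (simp add: Bs_ent algebra_simps)
      qed simp
      also have "\<dots> = complex_of_real (1/r) * ((\<Sum>k\<in>{0..<?n}. (if i = k then vec_index v k else 0))
            + (\<Sum>k\<in>{0..<?n}. complex_of_real h * (complex_of_real (\<Phi> $ e i $ e k) * vec_index v k)))"
        by (simp only: sum_distrib_left sum.distrib distrib_left)
      also have "\<dots> = complex_of_real (1/r) * (vec_index v i + complex_of_real h * s)"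
        using i by (simp only: s_def sum_distrib_left[symmetric]) (simp add: sum.delta)
      finally have "complex_of_real (1/r) * (vec_index v i + complex_of_real h * s) = \<mu> * vec_index v i"
        using eq v i by simp
      hence "vec_index v i + complex_of_real h * s = complex_of_real r * \<mu> * vec_index v i"
        using r0 by (simp add: field_simps)
      hence "s = z * vec_index v i" using hpos unfolding z_def by (simp add: field_simps)
      thus "vec_index (conv e \<Phi> *\<^sub>v v) i = vec_index (z \<cdot>\<^sub>v v) i" using lhs v i by simp
    qed (use v in simp)
    hence "z \<in> S" unfolding S_def spectrum_def Char_Poly.eigenvalue_def eigenvector_def
      using v nz by auto
    hence "cmod (1 + complex_of_real h * z) < r" by (rule rS)
    moreover have "1 + complex_of_real h * z = complex_of_real r * \<mu>"
      using hpos unfolding z_def by (simp add: field_simps)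
    ultimately have "r * cmod \<mu> < r" using r0 by (simp add: norm_mult)
    hence "cmod \<mu> < 1" using r0 by simp
    thus ?thesis using srm by simp
  qed
  have jnf: "\<exists>n_as. jordan_nf (conv e Bs) n_as"
    using char_poly_factorized[OF conv_carrier] jordan_nf_exists[OF conv_carrier] by blast
  obtain c where c: "\<And>k. norm_bound (conv e Bs ^\<^sub>m k) c"
    using spectral_radius_jnf_norm_bound_less_1[OF conv_carrier sr jnf] by blast
  have bound: "\<bar>matpow B k $ a $ b\<bar> \<le> c * r ^ k" for k a b
  proof -
    obtain i where i: "i < ?n" "e i = a" using e unfolding bij_betw_def by (metis UNIV_I atLeastLessThan_iff imageE)
    obtain j where j: "j < ?n" "e j = b" using e unfolding bij_betw_def by (metis UNIV_I atLeastLessThan_iff imageE)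
    have "norm ((conv e Bs ^\<^sub>m k) $$ (i,j)) \<le> c"
      using c[of k] i j unfolding norm_bound_def by (simp add: conv_pow[OF e, symmetric])
    hence "norm ((conv e (matpow Bs k)) $$ (i,j)) \<le> c" by (simp add: conv_pow[OF e])
    hence "\<bar>matpow Bs k $ a $ b\<bar> \<le> c" using i j by (simp add: conv_index)
    moreover have "matpow Bs k $ a $ b = (1/r)^k * matpow B k $ a $ b"
      by (simp add: Bs_def matpow_scaleR)
    ultimately have "(1/r)^k * \<bar>matpow B k $ a $ b\<bar> \<le> c" using r0 by (simp add: abs_mult)
    hence "r^k * ((1/r)^k * \<bar>matpow B k $ a $ b\<bar>) \<le> r^k * c"
      using r0 by (intro mult_left_mono) auto
    thus ?thesis using r0 by (simp add: power_one_over field_simps)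
  qed
  show ?thesis using hpos r0 r1 bound unfolding B_def by blast
qed



lemma norm_mv_bound:
  fixes M :: "real^'n::finite^'n"
  assumes "\<And>a b. \<bar>M $ a $ b\<bar> \<le> d"
  shows "norm (M *v y) \<le> (real CARD('n) * real CARD('n) * d) * norm y"
proof -
  have "norm (M *v y) \<le> (\<Sum>a\<in>UNIV. \<bar>(M *v y) $ a\<bar>)" by (rule norm_le_l1_cart)
  also have "\<dots> \<le> (\<Sum>a\<in>(UNIV::'n set). \<Sum>b\<in>(UNIV::'n set). d * norm y)"
  proof (rule sum_mono)
    fix a
    have "\<bar>(M *v y) $ a\<bar> = \<bar>\<Sum>b\<in>UNIV. M $ a $ b * y $ b\<bar>" by (simp add: matrix_vector_mult_def)
    also have "\<dots> \<le> (\<Sum>b\<in>UNIV. \<bar>M $ a $ b * y $ b\<bar>)" by (rule sum_abs)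
    also have "\<dots> \<le> (\<Sum>b\<in>(UNIV::'n set). d * norm y)"
    proof (rule sum_mono)
      fix b
      have "\<bar>M $ a $ b * y $ b\<bar> = \<bar>M $ a $ b\<bar> * \<bar>y $ b\<bar>" by (simp add: abs_mult)
      also have "\<dots> \<le> d * norm y"
        using assms[of a b] component_le_norm_cart[of y b] by (intro mult_mono) auto
      finally show "\<bar>M $ a $ b * y $ b\<bar> \<le> d * norm y" .
    qed
    finally show "\<bar>(M *v y) $ a\<bar> \<le> (\<Sum>b\<in>(UNIV::'n set). d * norm y)" .
  qed
  also have "\<dots> = (real CARD('n) * real CARD('n) * d) * norm y" by simp
  finally show ?thesis .
qed

lemma exists_N_half:
  fixes \<Phi> :: "real^'n::finite^'n"
  assumes hw: "hurwitz \<Phi>"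
  shows "\<exists>h>0. \<exists>N>0. \<forall>y. norm (matpow (Finite_Cartesian_Product.mat 1 + h *\<^sub>R \<Phi>) N *v y) \<le> (1/2) * norm y"
proof -
  obtain h r c where h: "h > 0" and r0: "r > 0" and r1: "r < 1"
    and c: "\<And>k a b. \<bar>matpow (Finite_Cartesian_Product.mat 1 + h *\<^sub>R \<Phi>) k $ a $ b\<bar> \<le> c * r ^ k"
    using hurwitz_pow_bound[OF hw] by blast
  define q where "q = real CARD('n) * real CARD('n) * (\<bar>c\<bar> + 1)"
  have q: "q > 0" unfolding q_def by simp
  have "(\<lambda>k. r ^ k) \<longlonglongrightarrow> 0" using r0 r1 by (intro LIMSEQ_realpow_zero) auto
  hence "eventually (\<lambda>k. r ^ k < 1 / (2 * q)) sequentially"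
    using q by (intro order_tendstoD(2)) auto
  then obtain N0 where N0: "\<And>k. k \<ge> N0 \<Longrightarrow> r ^ k < 1 / (2 * q)"
    unfolding eventually_sequentially by blast
  define N where "N = Suc N0"
  have "\<forall>y. norm (matpow (Finite_Cartesian_Product.mat 1 + h *\<^sub>R \<Phi>) N *v y) \<le> (1/2) * norm y"
  proof
    fix y :: "real^'n"
    have rN: "r ^ N < 1 / (2 * q)" using N0[of N] by (simp add: N_def)
    have "norm (matpow (Finite_Cartesian_Product.mat 1 + h *\<^sub>R \<Phi>) N *v y)
        \<le> (real CARD('n) * real CARD('n) * (\<bar>c\<bar> * r ^ N)) * norm y"
    proof (rule norm_mv_bound)
      fix a b
      have "c * r ^ N \<le> \<bar>c\<bar> * r ^ N" using r0 by (intro mult_right_mono) auto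
      thus "\<bar>matpow (Finite_Cartesian_Product.mat 1 + h *\<^sub>R \<Phi>) N $ a $ b\<bar> \<le> \<bar>c\<bar> * r ^ N"
        using c[of N a b] by linarith
    qed
    also have "real CARD('n) * real CARD('n) * (\<bar>c\<bar> * r ^ N) \<le> q * r ^ N"
    proof -
      have "\<bar>c\<bar> * r ^ N \<le> (\<bar>c\<bar> + 1) * r ^ N" using r0 by (intro mult_right_mono) auto
      hence "real CARD('n) * real CARD('n) * (\<bar>c\<bar> * r ^ N) \<le> real CARD('n) * real CARD('n) * ((\<bar>c\<bar> + 1) * r ^ N)"
        by (intro mult_left_mono) auto
      thus ?thesis unfolding q_def by (simp add: mult.assoc)
    qed
    hence "(real CARD('n) * real CARD('n) * (\<bar>c\<bar> * r ^ N)) * norm y \<le> (q * r ^ N) * norm y"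
      by (intro mult_right_mono) auto
    also have "q * r ^ N \<le> 1/2"
    proof -
      have "q * r ^ N < q * (1 / (2 * q))" using rN q by (intro mult_strict_left_mono) auto
      thus ?thesis using q by simp
    qed
    hence "(q * r ^ N) * norm y \<le> (1/2) * norm y" by (intro mult_right_mono) auto
    finally show "norm (matpow (Finite_Cartesian_Product.mat 1 + h *\<^sub>R \<Phi>) N *v y) \<le> (1/2) * norm y" .
  qed
  moreover have "N > 0" by (simp add: N_def)
  ultimately show ?thesis using h by blast
qed



lemma normsq_deriv:
  assumes "(f has_vector_derivative f') (at t)"
  shows "((\<lambda>t. (norm (f t))^2) has_real_derivative 2 * (f t \<bullet> f')) (at t)"
proof -
  have d: "(f has_derivative (\<lambda>h. h *\<^sub>R f')) (at t)" using assms unfolding has_vector_derivative_def .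
  have "((\<lambda>t. f t \<bullet> f t) has_derivative (\<lambda>h. f t \<bullet> (h *\<^sub>R f') + (h *\<^sub>R f') \<bullet> f t)) (at t)"
    by (rule has_derivative_inner[OF d d])
  moreover have "(\<lambda>h. f t \<bullet> (h *\<^sub>R f') + (h *\<^sub>R f') \<bullet> f t) = (*) (2 * (f t \<bullet> f'))"
    by (rule ext) (simp add: inner_commute algebra_simps)
  moreover have "(\<lambda>t. (norm (f t))^2) = (\<lambda>t. f t \<bullet> f t)" by (simp add: power2_norm_eq_inner)
  ultimately show ?thesis unfolding has_field_derivative_def by simp
qed

lemma mat_exp_zero_apply[simp]: "mat_exp 0 *v v = v"
  using mat_exp_apply[of 0 A v] by (simp add: bapp_one)

lemma mv_scaleR: "A *v (c *\<^sub>R w) = c *\<^sub>R (A *v w)" for A :: "real^'n::finite^'m::finite"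
  by (simp add: matrix_scaleR_vector_ac scaleR_matrix_vector_assoc)

lemma two_inner_le: "2 * (a \<bullet> (b - a)) \<le> (norm b)^2 - (norm a)^2" for a b :: "'a::real_inner"
proof -
  have "0 \<le> (norm (b - a))^2" by simp
  also have "(norm (b - a))^2 = (norm b)^2 - 2 * (a \<bullet> b) + (norm a)^2"
    by (simp add: power2_norm_eq_inner inner_diff_left inner_diff_right inner_commute)
  finally show ?thesis by (simp add: inner_diff_right power2_norm_eq_inner)
qed

lemma hurwitz_decay:
  fixes \<Phi> :: "real^'n::finite^'n"
  assumes hw: "hurwitz \<Phi>"
  shows "\<exists>C \<alpha>. C > 0 \<and> \<alpha> > 0 \<and> (\<forall>t\<ge>0. \<forall>v. (norm (mat_exp (t *\<^sub>R \<Phi>) *v v))^2 \<le> C * exp (-\<alpha> * t) * (norm v)^2)"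
proof -
  obtain h N where h: "h > 0" and N: "N > 0"
    and half: "\<And>y. norm (matpow (Finite_Cartesian_Product.mat 1 + h *\<^sub>R \<Phi>) N *v y) \<le> (1/2) * norm y"
    using exists_N_half[OF hw] by blast
  define B where "B = Finite_Cartesian_Product.mat 1 + h *\<^sub>R \<Phi>"
  define P where "P k = matpow B k" for k
  define V where "V y = (\<Sum>k<N. (norm (P k *v y))^2)" for y
  define K where "K = 1 + (\<Sum>k<N. (spectral_norm (P k))^2)"
  have Kpos: "K > 0" unfolding K_def by (simp add: add_pos_nonneg sum_nonneg)
  have V_ge: "(norm y)^2 \<le> V y" for y
  proof -
    have "(norm (P 0 *v y))^2 \<le> V y" unfolding V_def
      by (rule member_le_sum) (use N in auto)
    thus ?thesis by (simp add: P_def)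
  qed
  have V_le: "V y \<le> K * (norm y)^2" for y
  proof -
    have "V y \<le> (\<Sum>k<N. (spectral_norm (P k))^2 * (norm y)^2)" unfolding V_def
    proof (rule sum_mono)
      fix k
      have "norm (P k *v y) \<le> spectral_norm (P k) * norm y"
        unfolding spectral_norm_def by (rule onorm[OF matrix_vector_mul_bounded_linear])
      hence "(norm (P k *v y))^2 \<le> (spectral_norm (P k) * norm y)^2"
        by (intro power_mono) auto
      thus "(norm (P k *v y))^2 \<le> (spectral_norm (P k))^2 * (norm y)^2" by (simp add: power_mult_distrib)
    qed
    also have "\<dots> = (\<Sum>k<N. (spectral_norm (P k))^2) * (norm y)^2" by (simp add: sum_distrib_right)
    also have "\<dots> \<le> K * (norm y)^2" unfolding K_def by (intro mult_right_mono) auto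
    finally show ?thesis .
  qed
  define D where "D y = (\<Sum>k<N. 2 * ((P k *v y) \<bullet> (P k *v (\<Phi> *v y))))" for y
  have D_le: "D y \<le> - (3 / (4 * h)) * (norm y)^2" for y
  proof -
    have Phi_y: "\<Phi> *v y = (1/h) *\<^sub>R (B *v y - y)"
      using h by (simp add: B_def matrix_vector_mult_add_rdistrib scaleR_matrix_vector_assoc[symmetric])
    have step: "2 * ((P k *v y) \<bullet> (P k *v (\<Phi> *v y))) \<le> (1/h) * ((norm (P (Suc k) *v y))^2 - (norm (P k *v y))^2)" for k
    proof -
      have PS: "P (Suc k) *v y = P k *v (B *v y)"
        unfolding P_def by (simp only: matpow_Suc_right matrix_vector_mul_assoc)
      have "P k *v (\<Phi> *v y) = (1/h) *\<^sub>R (P (Suc k) *v y - P k *v y)"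
        unfolding Phi_y PS
        by (simp only: mv_scaleR matrix_vector_mult_diff_distrib)
      hence "2 * ((P k *v y) \<bullet> (P k *v (\<Phi> *v y))) = (1/h) * (2 * ((P k *v y) \<bullet> (P (Suc k) *v y - P k *v y)))"
        by simp
      also have "\<dots> \<le> (1/h) * ((norm (P (Suc k) *v y))^2 - (norm (P k *v y))^2)"
        using h by (intro mult_left_mono two_inner_le) auto
      finally show ?thesis .
    qed
    have "D y \<le> (\<Sum>k<N. (1/h) * ((norm (P (Suc k) *v y))^2 - (norm (P k *v y))^2))"
      unfolding D_def by (intro sum_mono step)
    also have "\<dots> = (1/h) * ((norm (P N *v y))^2 - (norm (P 0 *v y))^2)"
      by (simp only: sum_distrib_left[symmetric] sum_lessThan_telescope[of "\<lambda>k. (norm (P k *v y))^2"])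
    also have "(norm (P N *v y))^2 \<le> (1/4) * (norm y)^2"
    proof -
      have "norm (P N *v y) \<le> (1/2) * norm y" using half unfolding P_def B_def .
      hence "(norm (P N *v y))^2 \<le> ((1/2) * norm y)^2" by (intro power_mono) auto
      thus ?thesis by (simp add: power_mult_distrib power2_eq_square)
    qed
    hence "(1/h) * ((norm (P N *v y))^2 - (norm (P 0 *v y))^2) \<le> (1/h) * ((1/4) * (norm y)^2 - (norm y)^2)"
      using h by (intro mult_left_mono) (auto simp: P_def)
    also have "\<dots> = - (3 / (4 * h)) * (norm y)^2" by (simp add: field_simps)
    finally show ?thesis .
  qed
  define \<beta> where "\<beta> = 3 / (4 * h * K)"
  have \<beta>pos: "\<beta> > 0" unfolding \<beta>_def using h Kpos by simp
  have DV: "D y \<le> - \<beta> * V y" for y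
  proof -
    have "V y \<le> K * (norm y)^2" by (rule V_le)
    hence "\<beta> * V y \<le> \<beta> * (K * (norm y)^2)" using \<beta>pos by (intro mult_left_mono) auto
    also have "\<beta> * (K * (norm y)^2) = (3 / (4 * h)) * (norm y)^2"
      unfolding \<beta>_def using Kpos by (simp add: field_simps)
    finally show ?thesis using D_le[of y] by linarith
  qed
  define x where "x v t = mat_exp (t *\<^sub>R \<Phi>) *v v" for v t
  have xd: "(x v has_vector_derivative \<Phi> *v x v t) (at t)" for v t
    unfolding x_def by (rule mat_exp_deriv)
  have Vd: "((\<lambda>t. V (x v t)) has_real_derivative D (x v t)) (at t)" for v t
  proof -
    have "((\<lambda>t. \<Sum>k<N. (norm (P k *v x v t))^2) has_real_derivative
        (\<Sum>k<N. 2 * ((P k *v x v t) \<bullet> (P k *v (\<Phi> *v x v t))))) (at t)"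
    proof (rule DERIV_sum)
      fix k
      have "((\<lambda>t. P k *v x v t) has_vector_derivative P k *v (\<Phi> *v x v t)) (at t)"
        by (rule bounded_linear.has_vector_derivative[OF matrix_vector_mul_bounded_linear xd])
      thus "((\<lambda>t. (norm (P k *v x v t))^2) has_real_derivative 2 * ((P k *v x v t) \<bullet> (P k *v (\<Phi> *v x v t)))) (at t)"
        by (rule normsq_deriv)
    qed
    thus ?thesis unfolding V_def D_def .
  qed
  have main: "(norm (x v t))^2 \<le> K * exp (-\<beta> * t) * (norm v)^2" if t: "t \<ge> 0" for v t
  proof -
    define W where "W s = exp (\<beta> * s) * V (x v s)" for s
    have "W t \<le> W 0"
    proof (rule DERIV_nonpos_imp_nonincreasing[OF t])
      fix s assume "0 \<le> s" "s \<le> t"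
      have "(W has_real_derivative (exp (\<beta> * s) * \<beta>) * V (x v s) + exp (\<beta> * s) * D (x v s)) (at s)"
      proof -
        have "((\<lambda>s. exp (\<beta> * s)) has_real_derivative exp (\<beta> * s) * \<beta>) (at s)"
          by (auto intro!: derivative_eq_intros)
        from DERIV_mult[OF this Vd[of v s]] show ?thesis unfolding W_def by (simp add: mult.commute)
      qed
      moreover have "(exp (\<beta> * s) * \<beta>) * V (x v s) + exp (\<beta> * s) * D (x v s) \<le> 0"
      proof -
        have "(exp (\<beta> * s) * \<beta>) * V (x v s) + exp (\<beta> * s) * D (x v s)
            = exp (\<beta> * s) * (\<beta> * V (x v s) + D (x v s))" by (simp add: algebra_simps)
        moreover have "\<beta> * V (x v s) + D (x v s) \<le> 0" using DV[of "x v s"] by linarith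
        ultimately show ?thesis by (simp add: mult_nonneg_nonpos)
      qed
      ultimately show "\<exists>y. (W has_real_derivative y) (at s) \<and> y \<le> 0" by blast
    qed
    moreover have "W 0 = V v" unfolding W_def x_def by simp
    ultimately have "exp (\<beta> * t) * V (x v t) \<le> K * (norm v)^2"
      using V_le[of v] unfolding W_def by linarith
    hence "V (x v t) \<le> exp (-\<beta> * t) * (K * (norm v)^2)"
      by (simp add: exp_minus field_simps)
    thus ?thesis using V_ge[of "x v t"] by (simp add: algebra_simps)
  qed
  show ?thesis
    using Kpos \<beta>pos main unfolding x_def by blast
qed



lemma norm_exp_minus_one:
  fixes X :: "'a::{real_normed_algebra_1,banach}"
  shows "norm (exp X - 1) \<le> exp (norm X) - 1"
proof -
  define f where "f n = X ^ n /\<^sub>R fact n" for n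
  define g where "g n = norm X ^ n /\<^sub>R fact n" for n
  have sf: "f sums exp X" unfolding f_def by (rule exp_converges)
  have sg: "g sums exp (norm X)" unfolding g_def by (rule exp_converges)
  have sf1: "(\<lambda>n. f (Suc n)) sums (exp X - 1)"
    using sums_Suc_iff[of f "exp X - 1"] sf by (simp add: f_def)
  have sg1: "(\<lambda>n. g (Suc n)) sums (exp (norm X) - 1)"
    using sums_Suc_iff[of g "exp (norm X) - 1"] sg by (simp add: g_def)
  have "norm (suminf (\<lambda>n. f (Suc n))) \<le> suminf (\<lambda>n. g (Suc n))"
  proof (rule norm_suminf_le)
    fix n
    have "norm (f (Suc n)) = norm (X ^ Suc n) / fact (Suc n)" by (simp add: f_def field_simps)
    also have "\<dots> \<le> norm X ^ Suc n / fact (Suc n)"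
      by (intro divide_right_mono norm_power_ineq) auto
    also have "\<dots> = g (Suc n)" unfolding g_def by (simp add: field_simps)
    finally show "norm (f (Suc n)) \<le> g (Suc n)" .
  next
    show "summable (\<lambda>n. g (Suc n))" using sg1 by (rule sums_summable)
  qed
  thus ?thesis using sums_unique[OF sf1] sums_unique[OF sg1] by simp
qed

lemma bapp_diff: "bapp (X - Y) x = bapp X x - bapp Y x"
  by transfer (simp add: blinfun.bilinear_simps)

lemma mat_exp_close:
  "norm (mat_exp (t *\<^sub>R A) *v v - v) \<le> (exp (\<bar>t\<bar> * spectral_norm A) - 1) * norm v"
proof -
  have "mat_exp (t *\<^sub>R A) *v v - v = bapp (exp (t *\<^sub>R toM A) - 1) v"
    by (simp add: mat_exp_apply bapp_one bapp_diff)
  also have "norm \<dots> \<le> norm (exp (t *\<^sub>R toM A) - 1) * norm v" by (rule bapp_norm)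
  also have "\<dots> \<le> (exp (norm (t *\<^sub>R toM A)) - 1) * norm v"
    by (intro mult_right_mono norm_exp_minus_one) auto
  also have "norm (t *\<^sub>R toM A) = \<bar>t\<bar> * spectral_norm A" by (simp add: norm_toM)
  finally show ?thesis .
qed

lemma sym_inner:
  fixes \<Psi> :: "real^'n::finite^'n"
  assumes "transpose \<Psi> = \<Psi>"
  shows "x \<bullet> (\<Psi> *v y) = (\<Psi> *v x) \<bullet> y"
proof -
  have "x \<bullet> (\<Psi> *v y) = (x v* \<Psi>) \<bullet> y" by (simp add: dot_lmul_matrix)
  also have "x v* \<Psi> = \<Psi> *v x"
    using vector_transpose_matrix[of x \<Psi>] assms by simp
  finally show ?thesis .
qed

lemma psd_cs:
  fixes \<Psi> :: "real^'n::finite^'n"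
  assumes sym: "transpose \<Psi> = \<Psi>" and psd: "\<forall>x. 0 \<le> x \<bullet> (\<Psi> *v x)"
  shows "(y \<bullet> (\<Psi> *v z))^2 \<le> (y \<bullet> (\<Psi> *v y)) * (z \<bullet> (\<Psi> *v z))"
proof -
  define a where "a = y \<bullet> (\<Psi> *v y)"
  define b where "b = y \<bullet> (\<Psi> *v z)"
  define c where "c = z \<bullet> (\<Psi> *v z)"
  have zy: "z \<bullet> (\<Psi> *v y) = b" unfolding b_def using sym_inner[OF sym, of z y]
    by (simp add: inner_commute)
  have q: "0 \<le> a + 2 * s * b + s^2 * c" for s
  proof -
    have "0 \<le> (y + s *\<^sub>R z) \<bullet> (\<Psi> *v (y + s *\<^sub>R z))" using psd by blast
    also have "\<dots> = a + 2 * s * b + s^2 * c"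
      unfolding a_def c_def b_def[symmetric]
      using zy[unfolded b_def]
      by (simp add: matrix_vector_right_distrib inner_add_left inner_add_right mv_scaleR
          power2_eq_square algebra_simps b_def)
    finally show ?thesis .
  qed
  have a0: "0 \<le> a" using psd a_def by blast
  have c0: "0 \<le> c" using psd c_def by blast
  show ?thesis
  proof (cases "c = 0")
    case True
    have "b = 0"
    proof (rule ccontr)
      assume "b \<noteq> 0"
      have "0 \<le> a + 2 * (- (a + 1) / (2 * b)) * b" using q[of "- (a + 1) / (2 * b)"] True by simp
      also have "\<dots> = - 1" using \<open>b \<noteq> 0\<close> by (simp add: field_simps)
      finally show False by simp
    qed
    thus ?thesis using True unfolding a_def b_def c_def by simp
  next
    case False
    hence cpos: "c > 0" using c0 by simp
    have "0 \<le> a + 2 * (- b / c) * b + (- b / c)^2 * c" by (rule q)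
    also have "\<dots> = a - b^2 / c" using cpos by (simp add: field_simps power2_eq_square)
    finally have "b^2 / c \<le> a" by simp
    hence "b^2 \<le> a * c" using cpos by (simp add: pos_divide_le_eq)
    thus ?thesis unfolding a_def b_def c_def .
  qed
qed



lemma psd_max:
  fixes \<Psi> :: "real^'n::finite^'n"
  assumes sym: "transpose \<Psi> = \<Psi>" and psd: "\<forall>x. 0 \<le> x \<bullet> (\<Psi> *v x)"
  shows "\<exists>v. norm v = 1 \<and> v \<bullet> (\<Psi> *v v) = spectral_norm \<Psi>"
proof -
  let ?S = "sphere (0::real^'n) 1"
  let ?q = "\<lambda>x. x \<bullet> (\<Psi> *v x)"
  have cS: "compact ?S" by simp
  have neS: "?S \<noteq> {}"
  proof -
    have "axis (undefined::'n) (1::real) \<in> ?S" by (simp add: norm_axis_1)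
    thus ?thesis by blast
  qed
  have "continuous_on ?S (\<lambda>x. \<Psi> *v x)"
    by (rule linear_continuous_on[OF matrix_vector_mul_bounded_linear])
  hence cont: "continuous_on ?S ?q" by (intro continuous_on_inner continuous_on_id)
  obtain v where vS: "v \<in> ?S" and vmax: "\<And>y. y \<in> ?S \<Longrightarrow> ?q y \<le> ?q v"
    using continuous_attains_sup[OF cS neS cont] by blast
  define m where "m = ?q v"
  have nv: "norm v = 1" using vS by simp
  have m0: "0 \<le> m" using psd unfolding m_def by blast
  have qle: "?q y \<le> m * (norm y)^2" for y
  proof (cases "y = 0")
    case True thus ?thesis by simp
  next
    case False
    hence ny: "norm y > 0" by simp
    define u where "u = (1 / norm y) *\<^sub>R y"
    have "u \<in> ?S" using ny by (simp add: u_def)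
    hence "?q u \<le> m" unfolding m_def by (rule vmax)
    moreover have "?q u = ?q y / (norm y)^2"
      unfolding u_def by (simp add: mv_scaleR power2_eq_square)
    ultimately have "?q y / (norm y)^2 \<le> m" by simp
    thus ?thesis using ny by (simp add: pos_divide_le_eq)
  qed
  have bound: "norm (\<Psi> *v y) \<le> m * norm y" for y
  proof -
    define z where "z = \<Psi> *v y"
    have b: "y \<bullet> (\<Psi> *v z) = (norm z)^2"
      using sym_inner[OF sym, of y z] by (simp add: z_def power2_norm_eq_inner)
    have "(y \<bullet> (\<Psi> *v z))^2 \<le> ?q y * ?q z" by (rule psd_cs[OF sym psd])
    also have "\<dots> \<le> (m * (norm y)^2) * (m * (norm z)^2)"
    proof (rule mult_mono)
      show "?q y \<le> m * (norm y)^2" by (rule qle)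
      show "?q z \<le> m * (norm z)^2" by (rule qle)
      show "0 \<le> m * (norm y)^2" using m0 by simp
      show "0 \<le> ?q z" using psd by blast
    qed
    also have "\<dots> = (m * norm y * norm z)^2" by (simp add: power2_eq_square algebra_simps)
    finally have "(y \<bullet> (\<Psi> *v z))^2 \<le> (m * norm y * norm z)^2" .
    hence "((norm z)^2)^2 \<le> (m * norm y * norm z)^2" by (simp only: b)
    moreover have nn: "0 \<le> m * norm y * norm z" using m0 by simp
    ultimately have "(norm z)^2 \<le> m * norm y * norm z"
      by (rule power2_le_imp_le)
    hence "norm z * norm z \<le> (m * norm y) * norm z" unfolding power2_eq_square .
    hence "norm z \<le> m * norm y"
    proof (cases "norm z = 0")
      case True thus ?thesis using m0 by simp
    next
      case False
      hence "norm z > 0" by simp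
      thus ?thesis using \<open>norm z * norm z \<le> (m * norm y) * norm z\<close> by simp
    qed
    thus ?thesis by (simp add: z_def)
  qed
  have "spectral_norm \<Psi> \<le> m"
    unfolding spectral_norm_def by (rule onorm_bound[OF m0 bound])
  moreover have "m \<le> spectral_norm \<Psi>"
  proof -
    have "m \<le> norm v * norm (\<Psi> *v v)" unfolding m_def by (rule norm_cauchy_schwarz)
    also have "\<dots> \<le> spectral_norm \<Psi> * norm v"
      using nv onorm[OF matrix_vector_mul_bounded_linear, of \<Psi> v] by (simp add: spectral_norm_def)
    finally show ?thesis using nv by simp
  qed
  ultimately show ?thesis using nv unfolding m_def by (intro exI[of _ v]) auto
qed



lemma M_inner:
  fixes E \<Psi> :: "real^'n::finite^'n"
  shows "a \<bullet> ((transpose E ** \<Psi> ** E) *v b) = (E *v a) \<bullet> (\<Psi> *v (E *v b))"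
proof -
  have "(transpose E ** \<Psi> ** E) *v b = transpose E *v (\<Psi> *v (E *v b))"
    by (simp add: matrix_vector_mul_assoc matrix_mul_assoc)
  hence "a \<bullet> ((transpose E ** \<Psi> ** E) *v b) = a \<bullet> (transpose E *v (\<Psi> *v (E *v b)))"
    by (simp only:)
  also have "\<dots> = (a v* transpose E) \<bullet> (\<Psi> *v (E *v b))"
    by (rule dot_lmul_matrix[symmetric])
  also have "a v* transpose E = E *v a" by (rule vector_transpose_matrix)
  finally show ?thesis .
qed

lemma entry_axis:
  fixes A :: "real^'n::finite^'n"
  shows "A $ i $ j = axis i 1 \<bullet> (A *v axis j 1)"
proof -
  have "(A *v axis j 1) $ i = (\<Sum>k\<in>UNIV. A $ i $ k * axis j 1 $ k)"
    by (simp add: matrix_vector_mult_def)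
  also have "\<dots> = (\<Sum>k\<in>UNIV. if k = j then A $ i $ k else 0)"
    by (intro sum.cong) (auto simp: axis_def)
  also have "\<dots> = A $ i $ j" by simp
  finally have e: "(A *v axis j 1) $ i = A $ i $ j" .
  have "axis i 1 \<bullet> (A *v axis j 1) = (A *v axis j 1) \<bullet> axis i 1" by (rule inner_commute)
  also have "\<dots> = (A *v axis j 1) $ i \<bullet> 1" by (rule inner_axis)
  also have "\<dots> = A $ i $ j" using e by simp
  finally show ?thesis by simp
qed

lemma norm_mat_bound:
  fixes A :: "real^'n::finite^'n"
  assumes "\<And>i j. \<bar>A $ i $ j\<bar> \<le> d"
  shows "norm A \<le> real CARD('n) * real CARD('n) * d"
proof -
  have "norm A \<le> (\<Sum>i\<in>UNIV. norm (A $ i))"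
    unfolding norm_vec_def by (rule L2_set_le_sum) simp
  also have "\<dots> \<le> (\<Sum>i\<in>(UNIV::'n set). \<Sum>j\<in>(UNIV::'n set). d)"
  proof (rule sum_mono)
    fix i
    have "norm (A $ i) \<le> (\<Sum>j\<in>UNIV. \<bar>A $ i $ j\<bar>)" by (rule norm_le_l1_cart)
    also have "\<dots> \<le> (\<Sum>j\<in>(UNIV::'n set). d)" by (rule sum_mono) (rule assms)
    finally show "norm (A $ i) \<le> (\<Sum>j\<in>(UNIV::'n set). d)" .
  qed
  also have "\<dots> = real CARD('n) * real CARD('n) * d" by simp
  finally show ?thesis .
qed

lemma cont_expv: "continuous_on S (\<lambda>t. mat_exp (t *\<^sub>R A) *v a)"
  by (rule continuous_at_imp_continuous_on)
     (auto intro: has_vector_derivative_continuous[OF mat_exp_deriv])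

lemma cont_expv2: "continuous_on S (\<lambda>t. \<Psi> *v (mat_exp (t *\<^sub>R A) *v a))"
  by (rule continuous_at_imp_continuous_on)
     (auto intro: has_vector_derivative_continuous[OF
        bounded_linear.has_vector_derivative[OF matrix_vector_mul_bounded_linear mat_exp_deriv]])

lemma bounded_linear_quad:
  fixes v :: "real^'n::finite"
  shows "bounded_linear (\<lambda>X::real^'n^'n. v \<bullet> (X *v v))"
proof -
  have "linear (\<lambda>X::real^'n^'n. v \<bullet> (X *v v))"
    by (rule linearI) (simp_all add: matrix_vector_mult_add_rdistrib inner_add_right
        scaleR_matrix_vector_assoc[symmetric])
  thus ?thesis by (simp add: linear_conv_bounded_linear)
qed



theorem lemma3:
  fixes \<Psi> \<Phi> :: "real^'n^'n"
  assumes "transpose \<Psi> = \<Psi>"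
    and "\<forall>x. 0 \<le> x \<bullet> (\<Psi> *v x)"
    and "hurwitz \<Phi>"
  shows "spectral_norm
           (integral {0..} (\<lambda>t::real. transpose (mat_exp (t *\<^sub>R \<Phi>)) ** \<Psi> ** mat_exp (t *\<^sub>R \<Phi>)))
         \<ge> 1/2 * (ln (5/4) / spectral_norm \<Phi>) * spectral_norm \<Psi>"
proof -
  note sym = assms(1) and psd = assms(2) and hw = assms(3)
  define M where "M t = transpose (mat_exp (t *\<^sub>R \<Phi>)) ** \<Psi> ** mat_exp (t *\<^sub>R \<Phi>)" for t :: real
  define \<Theta> where "\<Theta> = integral {0..} M"
  define s where "s = spectral_norm \<Phi>"
  define m where "m = spectral_norm \<Psi>"
  have s0: "0 \<le> s" unfolding s_def spectral_norm_def
    by (rule onorm_pos_le[OF matrix_vector_mul_bounded_linear])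
  have m0: "0 \<le> m" unfolding m_def spectral_norm_def
    by (rule onorm_pos_le[OF matrix_vector_mul_bounded_linear])
  have T0: "0 \<le> spectral_norm \<Theta>" unfolding spectral_norm_def
    by (rule onorm_pos_le[OF matrix_vector_mul_bounded_linear])
  have goal_eq: "integral {0..} (\<lambda>t::real. transpose (mat_exp (t *\<^sub>R \<Phi>)) ** \<Psi> ** mat_exp (t *\<^sub>R \<Phi>)) = \<Theta>"
    unfolding \<Theta>_def M_def ..
  have "1/2 * (ln (5/4) / s) * m \<le> spectral_norm \<Theta>"
  proof (cases "s = 0")
    case True thus ?thesis using T0 by simp
  next
    case False
    hence spos: "s > 0" using s0 by simp
    obtain C \<alpha> where Cpos: "C > 0" and apos: "\<alpha> > 0"
      and decay: "\<And>t v. t \<ge> 0 \<Longrightarrow> (norm (mat_exp (t *\<^sub>R \<Phi>) *v v))^2 \<le> C * exp (-\<alpha> * t) * (norm v)^2"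
      using hurwitz_decay[OF hw] by blast
    define E where "E t = mat_exp (t *\<^sub>R \<Phi>)" for t :: real
    have Mi: "a \<bullet> (M t *v b) = (E t *v a) \<bullet> (\<Psi> *v (E t *v b))" for t a b
      unfolding M_def E_def by (rule M_inner)
    have Ment: "M t $ i $ j = (E t *v axis i 1) \<bullet> (\<Psi> *v (E t *v axis j 1))" for t i j
      using entry_axis[of "M t" i j] Mi by simp
    have Eax: "norm (E t *v axis i 1) \<le> sqrt (C * exp (-\<alpha> * t))" if "t \<ge> 0" for t i
      using decay[OF that, of "axis i 1"] unfolding E_def by (intro real_le_rsqrt) (simp add: norm_axis_1)
    have entb: "\<bar>M t $ i $ j\<bar> \<le> m * (C * exp (-\<alpha> * t))" if t: "t \<ge> 0" for t i j
    proof -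
      have "\<bar>M t $ i $ j\<bar> \<le> norm (E t *v axis i 1) * norm (\<Psi> *v (E t *v axis j 1))"
        unfolding Ment by (rule Cauchy_Schwarz_ineq2)
      also have "norm (\<Psi> *v (E t *v axis j 1)) \<le> m * norm (E t *v axis j 1)"
        unfolding m_def spectral_norm_def by (rule onorm[OF matrix_vector_mul_bounded_linear])
      hence "norm (E t *v axis i 1) * norm (\<Psi> *v (E t *v axis j 1))
          \<le> norm (E t *v axis i 1) * (m * norm (E t *v axis j 1))"
        by (intro mult_left_mono) auto
      also have "\<dots> = m * (norm (E t *v axis i 1) * norm (E t *v axis j 1))" by simp
      also have "norm (E t *v axis i 1) * norm (E t *v axis j 1)
          \<le> sqrt (C * exp (-\<alpha> * t)) * sqrt (C * exp (-\<alpha> * t))"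
        using Eax[OF t] Cpos by (intro mult_mono) auto
      also have "sqrt (C * exp (-\<alpha> * t)) * sqrt (C * exp (-\<alpha> * t)) = C * exp (-\<alpha> * t)"
        using Cpos by simp
      finally show ?thesis using m0 by (simp add: mult_left_mono)
    qed
    define K where "K = real CARD('n) * real CARD('n) * m * C"
    have normM: "norm (M t) \<le> K * exp (-\<alpha> * t)" if "t \<ge> 0" for t
    proof -
      have "norm (M t) \<le> real CARD('n) * real CARD('n) * (m * (C * exp (-\<alpha> * t)))"
        by (rule norm_mat_bound) (rule entb[OF that])
      thus ?thesis by (simp add: K_def algebra_simps)
    qed
    have contM: "continuous_on {0..} M"
    proof -
      have "M = (\<lambda>t. \<chi> i j. (E t *v axis i 1) \<bullet> (\<Psi> *v (E t *v axis j 1)))"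
        by (rule ext) (simp add: Finite_Cartesian_Product.vec_eq_iff Ment)
      moreover have "continuous_on {0..} (\<lambda>t. \<chi> i j. (E t *v axis i 1) \<bullet> (\<Psi> *v (E t *v axis j 1)))"
        unfolding E_def
        by (intro continuous_on_vec_lambda continuous_on_inner cont_expv cont_expv2)
      ultimately show ?thesis by simp
    qed
    have intM: "M integrable_on {0..}"
    proof (rule measurable_bounded_by_integrable_imp_integrable)
      show "M \<in> borel_measurable (lebesgue_on {0..})"
        by (rule continuous_imp_measurable_on_sets_lebesgue[OF contM]) simp
      show "(\<lambda>t. K * exp (-\<alpha> * t)) integrable_on {0..}"
        by (intro integrable_on_mult_right integrable_on_exp_minus_to_infinity apos)
      show "\<And>t. t \<in> {0..} \<Longrightarrow> norm (M t) \<le> K * exp (-\<alpha> * t)" using normM by simp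
      show "{0::real..} \<in> sets lebesgue" by simp
    qed
    obtain v where nv: "norm v = 1" and vm: "v \<bullet> (\<Psi> *v v) = m"
      using psd_max[OF sym psd] unfolding m_def by blast
    define ell where "ell X = v \<bullet> (X *v v)" for X :: "real^'n^'n"
    have bl: "bounded_linear ell" unfolding ell_def by (rule bounded_linear_quad)
    define q where "q t = (E t *v v) \<bullet> (\<Psi> *v (E t *v v))" for t
    have lq: "ell \<circ> M = q" unfolding ell_def q_def by (rule ext) (simp add: Mi)
    have intq: "q integrable_on {0..}" using integrable_linear[OF intM bl] lq by simp
    have intq_eq: "integral {0..} q = ell \<Theta>"
      using integral_linear[OF intM bl] lq unfolding \<Theta>_def by simp
    have q0: "\<And>t. 0 \<le> q t" unfolding q_def using psd by blast
    define c0 where "c0 = ln (5/4) / s"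
    have c0pos: "c0 > 0" unfolding c0_def using spos by simp
    have qbig: "m / 2 \<le> q t" if t: "t \<in> {0..c0}" for t
    proof -
      have t0: "0 \<le> t" and tc: "t \<le> c0" using t by auto
      define x where "x = E t *v v"
      define w where "w = x - v"
      have "norm w \<le> (exp (\<bar>t\<bar> * s) - 1) * norm v"
        unfolding w_def x_def E_def s_def by (rule mat_exp_close)
      also have "\<bar>t\<bar> * s \<le> ln (5/4)"
      proof -
        have "t * s \<le> c0 * s" using tc spos by (intro mult_right_mono) auto
        also have "c0 * s = ln (5/4)" unfolding c0_def using spos by simp
        finally show ?thesis using t0 by simp
      qed
      hence "exp (\<bar>t\<bar> * s) \<le> 5/4" by (metis exp_ln exp_le_cancel_iff zero_less_divide_iff zero_less_numeral)
      hence "(exp (\<bar>t\<bar> * s) - 1) * norm v \<le> 1/4" using nv by simp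
      finally have nw: "norm w \<le> 1/4" .
      have Pv: "norm (\<Psi> *v v) \<le> m"
        using onorm[OF matrix_vector_mul_bounded_linear, of \<Psi> v] nv unfolding m_def spectral_norm_def by simp
      have "q t = (v + w) \<bullet> (\<Psi> *v (v + w))" unfolding q_def w_def x_def by simp
      also have "\<dots> = v \<bullet> (\<Psi> *v v) + v \<bullet> (\<Psi> *v w) + w \<bullet> (\<Psi> *v v) + w \<bullet> (\<Psi> *v w)"
        by (simp add: matrix_vector_right_distrib inner_add_left inner_add_right)
      also have "v \<bullet> (\<Psi> *v w) = w \<bullet> (\<Psi> *v v)"
        using sym_inner[OF sym, of v w] by (simp add: inner_commute)
      finally have qe: "q t = m + 2 * (w \<bullet> (\<Psi> *v v)) + w \<bullet> (\<Psi> *v w)" using vm by simp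
      have "\<bar>w \<bullet> (\<Psi> *v v)\<bar> \<le> norm w * norm (\<Psi> *v v)" by (rule Cauchy_Schwarz_ineq2)
      also have "\<dots> \<le> (1/4) * m" using nw Pv by (intro mult_mono) auto
      finally have "- ((1/4) * m) \<le> w \<bullet> (\<Psi> *v v)" by linarith
      moreover have "0 \<le> w \<bullet> (\<Psi> *v w)" using psd by blast
      ultimately show ?thesis using qe by linarith
    qed
    have sub: "{0..c0} \<subseteq> {0::real..}" by auto
    have intq0: "q integrable_on {0..c0}" by (rule integrable_on_subinterval[OF intq sub])
    have "c0 * (m / 2) = integral {0..c0} (\<lambda>t. m / 2)"
      using c0pos by (simp add: content_real)
    also have "\<dots> \<le> integral {0..c0} q"
      by (rule integral_le[OF integrable_const_ivl intq0]) (rule qbig)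
    also have "\<dots> \<le> integral {0..} q"
      by (rule integral_subset_le[OF sub intq0 intq]) (simp add: q0)
    also have "\<dots> = v \<bullet> (\<Theta> *v v)" unfolding intq_eq ell_def ..
    also have "\<dots> \<le> norm v * norm (\<Theta> *v v)" by (rule norm_cauchy_schwarz)
    also have "\<dots> \<le> spectral_norm \<Theta>"
      using onorm[OF matrix_vector_mul_bounded_linear, of \<Theta> v] nv unfolding spectral_norm_def by simp
    finally have "c0 * (m / 2) \<le> spectral_norm \<Theta>" .
    thus ?thesis unfolding c0_def by simp
  qed
  thus ?thesis unfolding goal_eq s_def m_def by simp
qed


end
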